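(* Consider the flat $G(3)$-contact supergeometry on $J^1=J^1(\mathbb{C}^{2|2},\mathbb{C}^{1|0})$ (defined in the context) and let $\mathcal{E}=\widehat{\mathcal V}\subset J^2(\mathbb{C}^{2|2},\mathbb{C}^{1|0})$ be the collection of affine tangent spaces along its field of $(1|2)$-twisted cubics $\mathcal V$. Then $\mathcal E$ is a sub-supermanifold of dimension $(6|6)$ and it is given by the $G(3)$-contact super-PDE system $$u_{xx}=\tfrac13u_{yy}^3+2u_{yy}u_{y\nu}u_{y\tau},\quad u_{xy}=\tfrac12u_{yy}^2+u_{y\nu}u_{y\tau},\quad u_{x\nu}=u_{yy}u_{y\nu},\quad u_{x\tau}=u_{yy}u_{y\tau},\quad u_{\nu\tau}=-u_{yy}.$$
   Context: $J^1=J^1(\mathbb{C}^{2|2},\mathbb{C}^{1|0})$ has coordinates $(x^0,x^1,x^2,x^3,u,u_0,\dots,u_3)=(x,y,\nu,\tau,u,u_x,u_y,u_\nu,u_\tau)$, with $x,y,u,u_x,u_y$ even and the others odd; it has contact form $\sigma=du-\sum_i(dx^i)u_i$ and contact distribution $\mathcal C=\ker\sigma$ with flat frame $D_i=\partial_{x^i}+u_i\partial_u$, $U^i=\partial_{u_i}$ ($i=0,\dots,3$). $J^2=J^2(\mathbb{C}^{2|2},\mathbb{C}^{1|0})$ is the bundle of Lagrangian subspaces of $(\mathcal C,[d\sigma|_{\mathcal C}])$ with fibre coordinates $u_{ij}=(-1)^{|i||j|}u_{ji}$ (parity $|i|$ of $x^i$), the point $(u_{ij})$ corresponding to the Lagrangian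 subspace spanned by $D_i+\sum_ju_{ij}U^j$. Points and subspaces are understood via the functor of points: for a finite-dimensional supercommutative algebra $\mathbb A$, take $\lambda\in\mathbb A_{\bar0}$, $\theta,\phi\in\mathbb A_{\bar1}$. The field of $(1|2)$-twisted cubics $\mathcal V\subset\mathbb P(\mathcal C)$ of the flat frame consists, at each point, of the rank $(1|0)$ free $\mathbb A$-submodules spanned by $V=D_0-\lambda D_1-\theta D_2-\phi D_3-(\tfrac{\lambda^3}{6}+\lambda\theta\phi)U^0-(\tfrac{\lambda^2}{2}+\theta\phi)U^1-\lambda\phi U^2+\lambda\theta U^3$, together with (Zariski closure) the point at infinity spanned by $U^0$. The affine tangent space of $\mathcal V$ at the super-point spanned by $V$ is the Lagrangian $\mathbb A$-module spanned by $V$ and its derivatives in $\lambda,\theta,\phi$; explicitly it is spanned by $B_0=D_0+(\tfrac{\lambda^3}{3}+2\lambda\theta\phi)U^0+(\tfrac{\lambda^2}{2}+\theta\phi)U^1+\lambda\phi U^2-\lambda\theta U^3$, $B_1=D_1+(\tfrac{\lambda^2}{2}+\theta\phi)U^0+\lambda U^1+\phi U^2-\theta U^3$, $B_2=D_2+\lambda\phi U^0+\phi U^1-\lambda U^3$, $B_3=D_3-\lambda\theta U^0-\theta U^1+\lambda U^2$. $\widehat{\mathcal V}\subset J^2$ is the collection of these affine tangent spaces as the super-point varies along $\mathcal V$ (at all points of $J^1$). *)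

theory Defs
  imports Complex_Main
begin

text \<open>A finite-dimensional supercommutative (unital, associative) algebra over the complex
numbers, presented by its underlying ring (type 'a), the structure map
emb : complex -> A (central unital ring homomorphism, so scalar multiplication is
c . x = emb c * x), and its even and odd parts Ev, Od (a Z/2-grading).\<close>

definition supercomm_alg :: "(complex \<Rightarrow> 'a::ring_1) \<Rightarrow> 'a set \<Rightarrow> 'a set \<Rightarrow> bool" where
  "supercomm_alg emb Ev Od \<longleftrightarrow>
     (\<forall>a b. emb (a + b) = emb a + emb b) \<and> (\<forall>a b. emb (a * b) = emb a * emb b) \<and> emb 1 = 1 \<and>
     (\<forall>c x. emb c * x = x * emb c) \<and> (\<forall>c. emb c \<in> Ev) \<and>
     0 \<in> Od \<and>
     (\<forall>x\<in>Ev. \<forall>y\<in>Ev. x + y \<in> Ev) \<and> (\<forall>c. \<forall>x\<in>Ev. emb c * x \<in> Ev) \<and>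
     (\<forall>x\<in>Od. \<forall>y\<in>Od. x + y \<in> Od) \<and> (\<forall>c. \<forall>x\<in>Od. emb c * x \<in> Od) \<and>
     (\<forall>x. \<exists>!p. p \<in> Ev \<times> Od \<and> x = fst p + snd p) \<and>
     (\<forall>x\<in>Ev. \<forall>y\<in>Ev. x * y \<in> Ev) \<and>
     (\<forall>x\<in>Ev. \<forall>y\<in>Od. x * y \<in> Od \<and> y * x \<in> Od) \<and>
     (\<forall>x\<in>Od. \<forall>y\<in>Od. x * y \<in> Ev) \<and>
     (\<forall>x\<in>Ev. \<forall>y. x * y = y * x) \<and>
     (\<forall>x\<in>Od. \<forall>y\<in>Od. x * y = - (y * x)) \<and>
     (\<exists>B. finite B \<and> (\<forall>x. \<exists>c. x = (\<Sum>b\<in>B. emb (c b) * b)))"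

datatype j1coord = Cx | Cy | Cnu | Ctau | Cu | Cux | Cuy | Cunu | Cutau

fun j1odd :: "j1coord \<Rightarrow> bool" where
  "j1odd Cnu = True" | "j1odd Ctau = True" | "j1odd Cunu = True" | "j1odd Cutau = True"
| "j1odd _ = False"

text \<open>A-points of J^1: parity-respecting coordinate assignments.\<close>
definition J1pts :: "'a set \<Rightarrow> 'a set \<Rightarrow> (j1coord \<Rightarrow> 'a) set" where
  "J1pts Ev Od = {p. \<forall>c. p c \<in> (if j1odd c then Od else Ev)}"

datatype idx = Ix | Iy | Inu | Itau

fun iodd :: "idx \<Rightarrow> bool" where
  "iodd Inu = True" | "iodd Itau = True" | "iodd _ = False"

text \<open>A-points of a fibre of J^2 (in the chart u_ij): u_ij has parity |i|+|j| and
u_ij = (-1)^{|i||j|} u_ji.\<close>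
definition J2fib :: "'a::ring_1 set \<Rightarrow> 'a set \<Rightarrow> (idx \<Rightarrow> idx \<Rightarrow> 'a) \<Rightarrow> bool" where
  "J2fib Ev Od u \<longleftrightarrow>
     (\<forall>i j. u i j \<in> (if iodd i = iodd j then Ev else Od) \<and>
            u i j = (if iodd i \<and> iodd j then - u j i else u j i))"

text \<open>Coefficients u_ij of the affine tangent space spanned by B_i = D_i + sum_j u_ij U^j
(as listed in the context) at the super-point of the twisted cubic with parameters
lambda (even), theta, phi (odd).\<close>
fun Bcoef :: "(complex \<Rightarrow> 'a::ring_1) \<Rightarrow> 'a \<Rightarrow> 'a \<Rightarrow> 'a \<Rightarrow> idx \<Rightarrow> idx \<Rightarrow> 'a" where
  "Bcoef emb l t f Ix Ix = emb (1/3) * l^3 + 2 * l * t * f"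
| "Bcoef emb l t f Ix Iy = emb (1/2) * l^2 + t * f"
| "Bcoef emb l t f Ix Inu = l * f"
| "Bcoef emb l t f Ix Itau = - (l * t)"
| "Bcoef emb l t f Iy Ix = emb (1/2) * l^2 + t * f"
| "Bcoef emb l t f Iy Iy = l"
| "Bcoef emb l t f Iy Inu = f"
| "Bcoef emb l t f Iy Itau = - t"
| "Bcoef emb l t f Inu Ix = l * f"
| "Bcoef emb l t f Inu Iy = f"
| "Bcoef emb l t f Inu Inu = 0"
| "Bcoef emb l t f Inu Itau = - l"
| "Bcoef emb l t f Itau Ix = - (l * t)"
| "Bcoef emb l t f Itau Iy = - t"
| "Bcoef emb l t f Itau Inu = l"
| "Bcoef emb l t f Itau Itau = 0"

text \<open>A-points of \<open>\<E> = \<V>-hat\<close> in J^2: pairs (point of J^1, chart coordinates of an affine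
tangent space of the twisted cubic field at that point).\<close>
definition Ehat :: "(complex \<Rightarrow> 'a::ring_1) \<Rightarrow> 'a set \<Rightarrow> 'a set \<Rightarrow> ((j1coord \<Rightarrow> 'a) \<times> (idx \<Rightarrow> idx \<Rightarrow> 'a)) set" where
  "Ehat emb Ev Od = {(p, Bcoef emb l t f) | p l t f. p \<in> J1pts Ev Od \<and> l \<in> Ev \<and> t \<in> Od \<and> f \<in> Od}"

definition G3_pde :: "(complex \<Rightarrow> 'a::ring_1) \<Rightarrow> (idx \<Rightarrow> idx \<Rightarrow> 'a) \<Rightarrow> bool" where
  "G3_pde emb u \<longleftrightarrow>
     u Ix Ix = emb (1/3) * (u Iy Iy)^3 + 2 * u Iy Iy * u Iy Inu * u Iy Itau \<and>
     u Ix Iy = emb (1/2) * (u Iy Iy)^2 + u Iy Inu * u Iy Itau \<and>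
     u Ix Inu = u Iy Iy * u Iy Inu \<and>
     u Ix Itau = u Iy Iy * u Iy Itau \<and>
     u Inu Itau = - u Iy Iy"

end

theory Submission
  imports Defs
begin

lemma sa_facts:
  fixes emb :: "complex \<Rightarrow> 'a::ring_1"
  assumes A: "supercomm_alg emb Ev Od"
  shows emb0: "emb 0 = 0" and emb1: "emb 1 = 1" and emb2: "emb 2 = 2"
    and embneg: "emb (- c) = - emb c"
    and odneg: "x \<in> Od \<Longrightarrow> - x \<in> Od"
    and evneg: "x \<in> Ev \<Longrightarrow> - x \<in> Ev"
    and evemb: "emb c \<in> Ev"
    and evadd: "x \<in> Ev \<Longrightarrow> y \<in> Ev \<Longrightarrow> x + y \<in> Ev"
    and evmul: "x \<in> Ev \<Longrightarrow> y \<in> Ev \<Longrightarrow> x * y \<in> Ev"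
    and eomul: "x \<in> Ev \<Longrightarrow> y \<in> Od \<Longrightarrow> x * y \<in> Od"
    and oemul: "x \<in> Ev \<Longrightarrow> y \<in> Od \<Longrightarrow> y * x \<in> Od"
    and oomul: "x \<in> Od \<Longrightarrow> y \<in> Od \<Longrightarrow> x * y \<in> Ev"
    and oanti: "x \<in> Od \<Longrightarrow> y \<in> Od \<Longrightarrow> x * y = - (y * x)"
    and evcomm: "x \<in> Ev \<Longrightarrow> x * z = z * x"
    and embc: "emb c * z = z * emb c"
    and half: "(u::'a) + u = 0 \<Longrightarrow> u = 0"
    and evpow: "x \<in> Ev \<Longrightarrow> x ^ n \<in> Ev"
proof -
  note D = A[unfolded supercomm_alg_def]
  note add0 = D[THEN conjunct1]
  note mul0 = D[THEN conjunct2, THEN conjunct1]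
  note e1_ = D[THEN conjunct2, THEN conjunct2, THEN conjunct1]
  note cen = D[THEN conjunct2, THEN conjunct2, THEN conjunct2, THEN conjunct1]
  note embEv = D[THEN conjunct2, THEN conjunct2, THEN conjunct2, THEN conjunct2, THEN conjunct1]
  note z_od = D[THEN conjunct2, THEN conjunct2, THEN conjunct2, THEN conjunct2, THEN conjunct2, THEN conjunct1]
  note evadd_ = D[THEN conjunct2, THEN conjunct2, THEN conjunct2, THEN conjunct2, THEN conjunct2, THEN conjunct2, THEN conjunct1]
  note evsc = D[THEN conjunct2, THEN conjunct2, THEN conjunct2, THEN conjunct2, THEN conjunct2, THEN conjunct2, THEN conjunct2, THEN conjunct1]
  note odadd = D[THEN conjunct2, THEN conjunct2, THEN conjunct2, THEN conjunct2, THEN conjunct2, THEN conjunct2, THEN conjunct2, THEN conjunct2, THEN conjunct1]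
  note odsc = D[THEN conjunct2, THEN conjunct2, THEN conjunct2, THEN conjunct2, THEN conjunct2, THEN conjunct2, THEN conjunct2, THEN conjunct2, THEN conjunct2, THEN conjunct1]
  note uniq = D[THEN conjunct2, THEN conjunct2, THEN conjunct2, THEN conjunct2, THEN conjunct2, THEN conjunct2, THEN conjunct2, THEN conjunct2, THEN conjunct2, THEN conjunct2, THEN conjunct1]
  note evmul_ = D[THEN conjunct2, THEN conjunct2, THEN conjunct2, THEN conjunct2, THEN conjunct2, THEN conjunct2, THEN conjunct2, THEN conjunct2, THEN conjunct2, THEN conjunct2, THEN conjunct2, THEN conjunct1]
  note eo = D[THEN conjunct2, THEN conjunct2, THEN conjunct2, THEN conjunct2, THEN conjunct2, THEN conjunct2, THEN conjunct2, THEN conjunct2, THEN conjunct2, THEN conjunct2, THEN conjunct2, THEN conjunct2, THEN conjunct1]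
  note oo = D[THEN conjunct2, THEN conjunct2, THEN conjunct2, THEN conjunct2, THEN conjunct2, THEN conjunct2, THEN conjunct2, THEN conjunct2, THEN conjunct2, THEN conjunct2, THEN conjunct2, THEN conjunct2, THEN conjunct2, THEN conjunct1]
  note evc = D[THEN conjunct2, THEN conjunct2, THEN conjunct2, THEN conjunct2, THEN conjunct2, THEN conjunct2, THEN conjunct2, THEN conjunct2, THEN conjunct2, THEN conjunct2, THEN conjunct2, THEN conjunct2, THEN conjunct2, THEN conjunct2, THEN conjunct1]
  note oa = D[THEN conjunct2, THEN conjunct2, THEN conjunct2, THEN conjunct2, THEN conjunct2, THEN conjunct2, THEN conjunct2, THEN conjunct2, THEN conjunct2, THEN conjunct2, THEN conjunct2, THEN conjunct2, THEN conjunct2, THEN conjunct2, THEN conjunct2, THEN conjunct1]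
  note fin = D[THEN conjunct2, THEN conjunct2, THEN conjunct2, THEN conjunct2, THEN conjunct2, THEN conjunct2, THEN conjunct2, THEN conjunct2, THEN conjunct2, THEN conjunct2, THEN conjunct2, THEN conjunct2, THEN conjunct2, THEN conjunct2, THEN conjunct2, THEN conjunct2]
  have add: "\<And>a b. emb (a + b) = emb a + emb b" using add0 by blast
  have mul: "\<And>a b. emb (a * b) = emb a * emb b" using mul0 by blast
  show e0: "emb 0 = 0" using add[of 0 0] by simp
  show e1: "emb 1 = 1" by (rule e1_)
  show e2: "emb 2 = 2" using add[of 1 1] e1 by simp
  show en: "\<And>c. emb (- c) = - emb c"
  proof -
    fix c
    have "emb c + emb (- c) = 0" using add[of c "- c"] e0 by simp
    then show "emb (- c) = - emb c" by (rule minus_unique[symmetric])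
  qed
  have nx: "\<And>x. - x = emb (- 1) * x" using en[of 1] e1 by simp
  show "x \<in> Od \<Longrightarrow> - x \<in> Od" using odsc nx[of x] by (simp only:)
  show "x \<in> Ev \<Longrightarrow> - x \<in> Ev" using evsc nx[of x] by (simp only:)
  show "emb c \<in> Ev" using embEv by blast
  show "x \<in> Ev \<Longrightarrow> y \<in> Ev \<Longrightarrow> x + y \<in> Ev" using evadd_ by blast
  show "x \<in> Ev \<Longrightarrow> y \<in> Ev \<Longrightarrow> x * y \<in> Ev" using evmul_ by blast
  show "x \<in> Ev \<Longrightarrow> y \<in> Od \<Longrightarrow> x * y \<in> Od" using eo by blast
  show "x \<in> Ev \<Longrightarrow> y \<in> Od \<Longrightarrow> y * x \<in> Od" using eo by blast
  show "x \<in> Od \<Longrightarrow> y \<in> Od \<Longrightarrow> x * y \<in> Ev" using oo by blast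
  show "x \<in> Od \<Longrightarrow> y \<in> Od \<Longrightarrow> x * y = - (y * x)" using oa by blast
  show "x \<in> Ev \<Longrightarrow> x * z = z * x" using evc by blast
  show "emb c * z = z * emb c" using cen by blast
  show "u + u = 0 \<Longrightarrow> u = 0"
  proof -
    assume h: "u + u = 0"
    have "emb (1/2) * (u + u) = emb (1/2) * (emb 2 * u)" using e2 by (simp add: mult_2)
    also have "\<dots> = emb (1/2 * 2) * u" using mul[of "1/2" 2] by (simp only: mult.assoc)
    also have "\<dots> = u" using e1 by simp
    finally show "u = 0" using h by simp
  qed
  show "x \<in> Ev \<Longrightarrow> x ^ n \<in> Ev"
  proof (induction n)
    case 0 have "emb 1 \<in> Ev" using embEv by blast
    then show ?case using e1 by simp
  next
    case (Suc n) then show ?case using evmul_ by (simp only: power_Suc)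
  qed
qed

lemma img: "(\<lambda>(p, l, t, f). (p, Bcoef emb l t f)) ` (J1pts Ev Od \<times> Ev \<times> Od \<times> Od) = Ehat emb Ev Od"
proof
  show "(\<lambda>(p, l, t, f). (p, Bcoef emb l t f)) ` (J1pts Ev Od \<times> Ev \<times> Od \<times> Od) \<subseteq> Ehat emb Ev Od"
    unfolding Ehat_def by auto
  show "Ehat emb Ev Od \<subseteq> (\<lambda>(p, l, t, f). (p, Bcoef emb l t f)) ` (J1pts Ev Od \<times> Ev \<times> Od \<times> Od)"
  proof
    fix x assume "x \<in> Ehat emb Ev Od"
    then obtain p l t f where "x = (p, Bcoef emb l t f)" "p \<in> J1pts Ev Od" "l \<in> Ev" "t \<in> Od" "f \<in> Od"
      unfolding Ehat_def by blast
    then show "x \<in> (\<lambda>(p, l, t, f). (p, Bcoef emb l t f)) ` (J1pts Ev Od \<times> Ev \<times> Od \<times> Od)"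
      by (intro image_eqI[of _ _ "(p, l, t, f)"]) auto
  qed
qed

lemma inj: "inj_on (\<lambda>(p, l, t, f). (p, Bcoef emb l t f)) (J1pts Ev Od \<times> Ev \<times> Od \<times> Od)"
proof (rule inj_onI)
  fix x y assume "x \<in> J1pts Ev Od \<times> Ev \<times> Od \<times> Od" "y \<in> J1pts Ev Od \<times> Ev \<times> Od \<times> Od"
    and h: "(\<lambda>(p, l, t, f). (p, Bcoef emb l t f)) x = (\<lambda>(p, l, t, f). (p, Bcoef emb l t f)) y"
  obtain p l t f where x: "x = (p, l, t, f)" by (cases x) blast
  obtain p' l' t' f' where y: "y = (p', l', t', f')" by (cases y) blast
  have e: "p = p'" "Bcoef emb l t f = Bcoef emb l' t' f'" using h unfolding x y by simp_all
  have "Bcoef emb l t f Iy Iy = Bcoef emb l' t' f' Iy Iy"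
      "Bcoef emb l t f Iy Itau = Bcoef emb l' t' f' Iy Itau"
      "Bcoef emb l t f Iy Inu = Bcoef emb l' t' f' Iy Inu" using e(2) by simp_all
  then have "l = l'" "t = t'" "f = f'" by simp_all
  then show "x = y" unfolding x y using e(1) by simp
qed

theorem theorem4p7:
  fixes emb :: "complex \<Rightarrow> 'a::ring_1" and Ev Od :: "'a set"
  assumes "supercomm_alg emb Ev Od"
  shows "Ehat emb Ev Od = {(p, u). p \<in> J1pts Ev Od \<and> J2fib Ev Od u \<and> G3_pde emb u}
         \<and> bij_betw (\<lambda>(p, l, t, f). (p, Bcoef emb l t f)) (J1pts Ev Od \<times> Ev \<times> Od \<times> Od) (Ehat emb Ev Od)"
proof -
  note S = sa_facts[OF assms]
  have fwd: "J2fib Ev Od (Bcoef emb l t f) \<and> G3_pde emb (Bcoef emb l t f)"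
    if l: "l \<in> Ev" and t: "t \<in> Od" and f: "f \<in> Od" for l t f
  proof
    have tf: "f * t = - (t * f)" using S(13)[OF f t] .
    have ev2: "(2::'a) \<in> Ev" using S(7)[of 2] S(3) by simp
    have p1: "l * t * f \<in> Ev" using S l t f by (metis)
    have p2: "emb (1/3) * l^3 \<in> Ev" using S l by metis
    have xx: "emb (1/3) * l^3 + 2 * l * t * f \<in> Ev" using S(8,9) p1 p2 ev2 by (metis mult.assoc)
    have xy: "emb (1/2) * l^2 + t * f \<in> Ev" using S l t f by metis
    have xn: "l * f \<in> Od" using S l f by metis
    have xt: "- (l * t) \<in> Od" using S l t by metis
    have mt: "- t \<in> Od" using S t by metis
    have ml: "- l \<in> Ev" using S l by metis
    have z: "(0::'a) \<in> Ev" using S(7)[of 0] S(1) by simp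
    show "J2fib Ev Od (Bcoef emb l t f)"
      unfolding J2fib_def
    proof (intro allI)
      fix i j show "Bcoef emb l t f i j \<in> (if iodd i = iodd j then Ev else Od) \<and>
            Bcoef emb l t f i j = (if iodd i \<and> iodd j then - Bcoef emb l t f j i else Bcoef emb l t f j i)"
        by (cases i; cases j; simp only: Bcoef.simps iodd.simps if_True if_False simp_thms
             l t f xx xy xn xt mt ml z minus_minus minus_zero)
    qed
    show "G3_pde emb (Bcoef emb l t f)" unfolding G3_pde_def
      by (simp add: tf mult.assoc)
  qed
  have bwd: "u = Bcoef emb (u Iy Iy) (- u Iy Itau) (u Iy Inu) \<and> u Iy Iy \<in> Ev \<and> - u Iy Itau \<in> Od \<and> u Iy Inu \<in> Od"
    if J: "J2fib Ev Od u" and P: "G3_pde emb u" for u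
  proof -
    have J': "\<And>i j. u i j \<in> (if iodd i = iodd j then Ev else Od) \<and>
            u i j = (if iodd i \<and> iodd j then - u j i else u j i)" using J unfolding J2fib_def by blast
    have l: "u Iy Iy \<in> Ev" using J'[of Iy Iy] by simp
    have s: "u Iy Itau \<in> Od" using conjunct1[OF J'[of Iy Itau]] by simp
    have f: "u Iy Inu \<in> Od" using conjunct1[OF J'[of Iy Inu]] by simp
    have fs: "u Iy Inu * u Iy Itau = - (u Iy Itau * u Iy Inu)" using S(13)[OF f s] .
    have y1: "u Iy Ix = u Ix Iy" using J'[of Iy Ix] by simp
    have y2: "u Inu Ix = u Ix Inu" using J'[of Inu Ix] by simp
    have y3: "u Inu Iy = u Iy Inu" using J'[of Inu Iy] by simp
    have y4: "u Itau Ix = u Ix Itau" using J'[of Itau Ix] by simp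
    have y5: "u Itau Iy = u Iy Itau" using conjunct2[OF J'[of Itau Iy]] by simp
    have y6: "u Itau Inu = - u Inu Itau" using J'[of Itau Inu] by simp
    have y7: "u Inu Inu = 0" using J'[of Inu Inu] S(16)[of "u Inu Inu"] by (metis iodd.simps(1) add.right_inverse)
    have y8: "u Itau Itau = 0" using J'[of Itau Itau] S(16)[of "u Itau Itau"] by (metis iodd.simps(2) add.right_inverse)
    have P': "u Ix Ix = emb (1/3) * (u Iy Iy)^3 + 2 * u Iy Iy * u Iy Inu * u Iy Itau"
       "u Ix Iy = emb (1/2) * (u Iy Iy)^2 + u Iy Inu * u Iy Itau"
       "u Ix Inu = u Iy Iy * u Iy Inu"
       "u Ix Itau = u Iy Iy * u Iy Itau"
       "u Inu Itau = - u Iy Iy" using P unfolding G3_pde_def by auto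
    have eq: "u i j = Bcoef emb (u Iy Iy) (- u Iy Itau) (u Iy Inu) i j" for i j
    proof (cases i; cases j)
      assume "i = Ix" "j = Ix" then show ?thesis
        by (simp only: Bcoef.simps P'(1)) (simp add: fs mult.assoc)
    next
      assume "i = Ix" "j = Iy" then show ?thesis
        by (simp only: Bcoef.simps P'(2)) (simp add: fs)
    next
      assume "i = Ix" "j = Inu" then show ?thesis
        by (simp only: Bcoef.simps P'(3))
    next
      assume "i = Ix" "j = Itau" then show ?thesis
        by (simp only: Bcoef.simps P'(4)) simp
    next
      assume "i = Iy" "j = Ix" then show ?thesis
        by (simp only: Bcoef.simps y1 P'(2)) (simp add: fs)
    next
      assume "i = Iy" "j = Iy" then show ?thesis
        by (simp only: Bcoef.simps)
    next
      assume "i = Iy" "j = Inu" then show ?thesis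
        by (simp only: Bcoef.simps)
    next
      assume "i = Iy" "j = Itau" then show ?thesis
        by (simp only: Bcoef.simps minus_minus)
    next
      assume "i = Inu" "j = Ix" then show ?thesis
        by (simp only: Bcoef.simps y2 P'(3))
    next
      assume "i = Inu" "j = Iy" then show ?thesis
        by (simp only: Bcoef.simps y3)
    next
      assume "i = Inu" "j = Inu" then show ?thesis
        by (simp only: Bcoef.simps y7)
    next
      assume "i = Inu" "j = Itau" then show ?thesis
        by (simp only: Bcoef.simps P'(5))
    next
      assume "i = Itau" "j = Ix" then show ?thesis
        by (simp only: Bcoef.simps y4 P'(4)) simp
    next
      assume "i = Itau" "j = Iy" then show ?thesis
        by (simp only: Bcoef.simps y5 minus_minus)
    next
      assume "i = Itau" "j = Inu" then show ?thesis
        by (simp only: Bcoef.simps y6 P'(5) minus_minus)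
    next
      assume "i = Itau" "j = Itau" then show ?thesis
        by (simp only: Bcoef.simps y8)
    qed
    have "u = Bcoef emb (u Iy Iy) (- u Iy Itau) (u Iy Inu)" by (rule ext, rule ext, rule eq)
    then show ?thesis using l f S(5)[OF s] by (intro conjI)
  qed
  note inj = inj[of emb Ev Od]
  note img = img[of emb Ev Od]
  have E: "Ehat emb Ev Od = {(p, u). p \<in> J1pts Ev Od \<and> J2fib Ev Od u \<and> G3_pde emb u}"
  proof
    show "Ehat emb Ev Od \<subseteq> {(p, u). p \<in> J1pts Ev Od \<and> J2fib Ev Od u \<and> G3_pde emb u}"
      unfolding Ehat_def using fwd by fast
    show "{(p, u). p \<in> J1pts Ev Od \<and> J2fib Ev Od u \<and> G3_pde emb u} \<subseteq> Ehat emb Ev Od"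
    proof clarify
      fix p u assume "p \<in> J1pts Ev Od" "J2fib Ev Od u" "G3_pde emb u"
      then obtain l t f where B: "u = Bcoef emb l t f" "l \<in> Ev" "t \<in> Od" "f \<in> Od"
        using bwd[of u] by blast
      have "(p, u) \<in> (\<lambda>(p, l, t, f). (p, Bcoef emb l t f)) ` (J1pts Ev Od \<times> Ev \<times> Od \<times> Od)"
        apply (rule image_eqI[of _ _ "(p, l, t, f)"])
        using B \<open>p \<in> J1pts Ev Od\<close> by simp_all
      then show "(p, u) \<in> Ehat emb Ev Od" using img by simp
    qed
  qed
  show ?thesis unfolding bij_betw_def using E inj img by (intro conjI)
qed

end
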